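(* Let $\sigma=(a_1,\ldots,a_s)$ be a partition of $r$ with $a_1\ge\cdots\ge a_s\ge1$, and let $n\ge s$ and $q\ge a_1$ be integers. Then for every $k$ with $1\le k\le r-1$ there exists at least one $(q,k,\sigma)$-feasible sequence $(b_1,\ldots,b_n)$.
   Context: A sequence $B=(b_1,\ldots,b_n)$ of non-negative integers is $(q,k,\sigma)$-feasible if $b_1\ge b_2\ge\cdots\ge b_n$, $b_j=b_s$ for all $j\ge s$, $q\ge\max\{a_1,b_1\}$, and $\sum_{i=1}^{s}\min\{a_i,b_i\}=k$. *)

theory Defs
  imports Main
begin

text \<open>Sequences are 1-indexed functions nat => nat; only indices 1..n (resp. 1..s) matter.
  sigma = (a 1, ..., a s), B = (b 1, ..., b n).\<close>

definition is_partition :: "(nat \<Rightarrow> nat) \<Rightarrow> nat \<Rightarrow> nat \<Rightarrow> bool" where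
  "is_partition a s r \<longleftrightarrow>
     (\<forall>i j. 1 \<le> i \<longrightarrow> i \<le> j \<longrightarrow> j \<le> s \<longrightarrow> a j \<le> a i) \<and>
     (\<forall>i. 1 \<le> i \<longrightarrow> i \<le> s \<longrightarrow> 1 \<le> a i) \<and>
     (\<Sum>i=1..s. a i) = r"

definition feasible :: "nat \<Rightarrow> nat \<Rightarrow> (nat \<Rightarrow> nat) \<Rightarrow> nat \<Rightarrow> nat \<Rightarrow> (nat \<Rightarrow> nat) \<Rightarrow> bool" where
  "feasible q k a s n b \<longleftrightarrow>
     (\<forall>i j. 1 \<le> i \<longrightarrow> i \<le> j \<longrightarrow> j \<le> n \<longrightarrow> b j \<le> b i) \<and>
     (\<forall>j. s \<le> j \<longrightarrow> j \<le> n \<longrightarrow> b j = b s) \<and>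
     max (a 1) (b 1) \<le> q \<and>
     (\<Sum>i=1..s. min (a i) (b i)) = k"

end

theory Submission
  imports Defs
begin

lemma ivt_gen:
  fixes h :: "nat \<Rightarrow> nat"
  shows "h 0 \<le> k \<Longrightarrow> k < h N \<Longrightarrow> \<exists>i<N. h i \<le> k \<and> k < h (Suc i)"
proof (induction N)
  case 0 then show ?case by simp
next
  case (Suc N)
  show ?case
  proof (cases "k < h N")
    case True then show ?thesis using Suc by (meson less_Suc_eq)
  next
    case False then show ?thesis using Suc by (metis lessI not_less)
  qed
qed

lemma ivt_step:
  fixes h :: "nat \<Rightarrow> nat"
  shows "h 0 \<le> k \<Longrightarrow> k < h N \<Longrightarrow> (\<forall>i<N. h (Suc i) \<le> h i + 1) \<Longrightarrow> \<exists>i<N. h i = k"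
proof (induction N)
  case 0 then show ?case by simp
next
  case (Suc N)
  show ?case
  proof (cases "k < h N")
    case True then show ?thesis using Suc by (meson less_Suc_eq)
  next
    case False
    have "h (Suc N) \<le> h N + 1" using Suc by simp
    then have "h N = k" using False Suc by linarith
    then show ?thesis by blast
  qed
qed

theorem lemma2p6:
  fixes a :: "nat \<Rightarrow> nat" and s r n q k :: nat
  assumes "is_partition a s r"
    and "s \<le> n" and "a 1 \<le> q"
    and "1 \<le> k" and "k \<le> r - 1"
  shows "\<exists>b :: nat \<Rightarrow> nat. feasible q k a s n b"
proof -
  define bb where "bb t d i = (if i \<le> d then Suc t else t)" for t d i :: nat
  define g where "g t d = (\<Sum>i=1..s. min (a i) (bb t d i))" for t d
  have mono: "\<And>i. 1 \<le> i \<Longrightarrow> i \<le> s \<Longrightarrow> a i \<le> a 1"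
    using assms(1) unfolding is_partition_def by auto
  have rsum: "(\<Sum>i=1..s. a i) = r" using assms(1) unfolding is_partition_def by auto
  have kr: "k < r" using assms(4,5) by linarith
  have g00: "g 0 0 = 0" unfolding g_def bb_def by simp
  have ga1: "g (a 1) 0 = r"
  proof -
    have "g (a 1) 0 = (\<Sum>i=1..s. a i)" unfolding g_def bb_def
      by (rule sum.cong) (use mono in \<open>auto simp: min_def\<close>)
    then show ?thesis using rsum by simp
  qed
  have gshift: "g t s = g (Suc t) 0" for t
    unfolding g_def bb_def by (rule sum.cong) auto
  have gstep: "g t (Suc d) \<le> g t d + 1" if "d < s" for t d
  proof -
    have "g t (Suc d) \<le> (\<Sum>i=1..s. min (a i) (bb t d i) + (if i = Suc d then 1 else 0))"
      unfolding g_def by (rule sum_mono) (auto simp: bb_def)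
    also have "\<dots> = g t d + (\<Sum>i=1..s. (if i = Suc d then 1 else 0))"
      unfolding g_def by (simp add: sum.distrib)
    also have "\<dots> = g t d + 1" using that by (simp add: sum.delta)
    finally show ?thesis .
  qed
  obtain t where t: "t < a 1" "g t 0 \<le> k" "k < g (Suc t) 0"
    using ivt_gen[of "\<lambda>t. g t 0" k "a 1"] g00 ga1 kr by auto
  obtain d where d: "d < s" "g t d = k"
    using ivt_step[of "g t" k s] t gstep gshift by auto
  have "feasible q k a s n (bb t d)"
    unfolding feasible_def
  proof (intro conjI allI impI)
    fix i j assume "1 \<le> i" "i \<le> j" "j \<le> n"
    then show "bb t d j \<le> bb t d i" unfolding bb_def by auto
  next
    fix j assume "s \<le> j" "j \<le> n"
    then show "bb t d j = bb t d s" unfolding bb_def using d by auto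
  next
    show "max (a 1) (bb t d 1) \<le> q" using t assms(3) unfolding bb_def by auto
  next
    show "(\<Sum>i=1..s. min (a i) (bb t d i)) = k" using d unfolding g_def by simp
  qed
  then show ?thesis by blast
qed

end
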